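(* Let $\theta_0=\pi/4$, $\kappa=1$, $\ell=6/5$, and for $\varepsilon\in\,]0,1[$ let $I_\varepsilon(y)=\varepsilon$ for $y\in[0,1]$ and $I_\varepsilon(y)=1$ for $y>1$. Then there exists $\hat\varepsilon\in\,]0,1[$ such that (OP1) with light intensity $I_{\hat\varepsilon}$ has (at least) two distinct optimal solutions $(h_1,\theta_1)$ and $(h_2,\theta_2)$, with $h_1<1<h_2$.
   Context: Model 1. For $\theta\in[\theta_0,\pi/2]$ define $G(\theta)=\Big(1-\exp\Big\{\frac{-\kappa}{\cos(\theta-\theta_0)}\Big\}\Big)\cos(\theta-\theta_0)$ and $g(\theta)=G(\theta)/\sin\theta$. Given a non-decreasing $I:[0,\infty)\to[0,1]$, problem (OP1) is: among all pairs $(h,\theta)$ with $h>0$, $\theta:[0,h]\to[\theta_0,\pi/2]$ measurable and $\int_0^h \frac{dy}{\sin\theta(y)}=\ell$, maximize $\int_0^h I(y)\,g(\theta(y))\,dy$. *)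

theory Defs
  imports "HOL-Analysis.Analysis"
begin

definition G1 :: "real \<Rightarrow> real \<Rightarrow> real \<Rightarrow> real" where
  "G1 \<theta>0 \<kappa> \<theta> = (1 - exp (- \<kappa> / cos (\<theta> - \<theta>0))) * cos (\<theta> - \<theta>0)"

definition g1 :: "real \<Rightarrow> real \<Rightarrow> real \<Rightarrow> real" where
  "g1 \<theta>0 \<kappa> \<theta> = G1 \<theta>0 \<kappa> \<theta> / sin \<theta>"

definition admissible1 :: "real \<Rightarrow> real \<Rightarrow> real \<Rightarrow> (real \<Rightarrow> real) \<Rightarrow> bool" where
  "admissible1 \<theta>0 ell h \<theta> \<longleftrightarrow>
     h > 0 \<and>
     set_borel_measurable lebesgue {0..h} \<theta> \<and>
     (\<forall>y\<in>{0..h}. \<theta>0 \<le> \<theta> y \<and> \<theta> y \<le> pi / 2) \<and>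
     (LINT y:{0..h}|lebesgue. 1 / sin (\<theta> y)) = ell"

definition J1 :: "(real \<Rightarrow> real) \<Rightarrow> real \<Rightarrow> real \<Rightarrow> real \<Rightarrow> (real \<Rightarrow> real) \<Rightarrow> real" where
  "J1 I \<theta>0 \<kappa> h \<theta> = (LINT y:{0..h}|lebesgue. I y * g1 \<theta>0 \<kappa> (\<theta> y))"

definition optimal_OP1 ::
  "(real \<Rightarrow> real) \<Rightarrow> real \<Rightarrow> real \<Rightarrow> real \<Rightarrow> real \<Rightarrow> (real \<Rightarrow> real) \<Rightarrow> bool" where
  "optimal_OP1 I \<theta>0 \<kappa> ell h \<theta> \<longleftrightarrow>
     admissible1 \<theta>0 ell h \<theta> \<and>
     (\<forall>h' \<theta>'. admissible1 \<theta>0 ell h' \<theta>' \<longrightarrow> J1 I \<theta>0 \<kappa> h' \<theta>' \<le> J1 I \<theta>0 \<kappa> h \<theta>)"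

definition I_step :: "real \<Rightarrow> real \<Rightarrow> real" where
  "I_step \<epsilon> y = (if y \<le> 1 then \<epsilon> else 1)"

end

theory Submission
  imports Defs
begin

definition ff :: "real \<Rightarrow> real" where "ff c = (1 - exp (- 1 / c)) * c"

lemma ff_deriv: "x > 0 \<Longrightarrow> (ff has_real_derivative (1 - exp (-1/x) - exp (-1/x) / x)) (at x)"
  unfolding ff_def
  apply (rule derivative_eq_intros refl | simp)+
  done

lemma ff_mono: assumes "0 < a" "a < b" shows "ff a < ff b"
proof (rule DERIV_pos_imp_increasing[OF assms(2)])
  fix x assume x: "a \<le> x" "x \<le> b"
  hence xp: "x > 0" using assms by auto
  define t where "t = 1/x"
  have tp: "t > 0" using xp by (simp add: t_def)
  have "1 + t/2 \<le> exp (t/2)" by simp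
  hence "(1 + t/2)^2 \<le> exp (t/2) ^ 2" by (intro power_mono) (use tp in auto)
  also have "exp (t/2) ^ 2 = exp t" by (simp add: exp_double[symmetric])
  finally have h: "(1 + t/2)^2 \<le> exp t" .
  have "(1 + t/2)^2 = 1 + t + t*t/4" by (simp add: power2_eq_square field_simps)
  with h mult_pos_pos[OF tp tp] have "1 + t < exp t" by linarith
  hence "exp (-t) * (1 + t) < 1" by (simp add: exp_minus field_simps)
  hence "1 - exp (-1/x) - exp (-1/x) / x > 0" using xp by (simp add: t_def field_simps)
  thus "\<exists>y. DERIV ff x :> y \<and> y > 0" using ff_deriv[OF xp] by blast
qed

lemma fin_Icc: "emeasure lebesgue {0..(h::real)} < \<infinity>" by (simp add: emeasure_lborel_Icc_eq)

lemma integ: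
  fixes \<theta> f w :: "real \<Rightarrow> real"
  assumes m: "set_borel_measurable lebesgue {0..h} \<theta>"
    and f: "f \<in> borel_measurable borel" and w: "w \<in> borel_measurable borel"
    and b: "\<And>y. y \<in> {0..h} \<Longrightarrow> \<bar>w y * f (\<theta> y)\<bar> \<le> B"
  shows "set_integrable lebesgue {0..h} (\<lambda>y. w y * f (\<theta> y))"
  unfolding set_integrable_def
proof (rule integrableI_bounded_set[where A="{0..h}" and B=B])
  let ?t = "\<lambda>y. indicator {0..h} y *\<^sub>R \<theta> y"
  have mt: "?t \<in> borel_measurable lebesgue" using m by (simp add: set_borel_measurable_def)
  have eq: "(\<lambda>y. indicat_real {0..h} y *\<^sub>R (w y * f (\<theta> y))) =
      (\<lambda>y. indicat_real {0..h} y * (w y * f (?t y)))"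
    by (auto simp: indicator_def fun_eq_iff)
  have m1: "(\<lambda>y. f (?t y)) \<in> borel_measurable lebesgue"
    using measurable_compose[OF mt f] by (simp add: comp_def)
  have m2: "w \<in> borel_measurable lebesgue" using w by (simp add: measurable_completion)
  show "(\<lambda>y. indicat_real {0..h} y *\<^sub>R (w y * f (\<theta> y))) \<in> borel_measurable lebesgue"
    unfolding eq
  proof (intro borel_measurable_times)
    show "indicat_real {0..h} \<in> borel_measurable lebesgue" by (rule borel_measurable_indicator) auto
  qed (use m1 m2 in auto)
  show "emeasure lebesgue {0..h} < \<infinity>" by (rule fin_Icc)
  show "AE x in lebesgue. x \<in> {0..h} \<longrightarrow> norm (indicat_real {0..h} x *\<^sub>R (w x * f (\<theta> x))) \<le> B"
    using b by (auto simp: indicator_def)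
  show "AE x in lebesgue. x \<notin> {0..h} \<longrightarrow> indicat_real {0..h} x *\<^sub>R (w x * f (\<theta> x)) = 0"
    by auto
qed simp

lemma c0_pos: "ff 1 > 0" by (simp add: ff_def)

lemma G_ff: "G1 (pi/4) 1 \<theta> = ff (cos (\<theta> - pi/4))" by (simp add: G1_def ff_def)

lemma cos_pos: "pi/4 \<le> \<theta> \<Longrightarrow> \<theta> \<le> pi/2 \<Longrightarrow> cos (\<theta> - pi/4) > 0"
  using pi_gt_zero by (intro cos_gt_zero_pi) linarith+

lemma G_lt: assumes "pi/4 < \<theta>" "\<theta> \<le> pi/2" shows "G1 (pi/4) 1 \<theta> < ff 1"
proof -
  have "cos (\<theta> - pi/4) < cos 0" by (rule cos_monotone_0_pi) (use assms in auto)
  thus ?thesis unfolding G_ff using ff_mono cos_pos assms by auto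
qed

lemma G_le: assumes "pi/4 \<le> \<theta>" "\<theta> \<le> pi/2" shows "G1 (pi/4) 1 \<theta> \<le> ff 1"
proof (cases "\<theta> = pi/4")
  case True have "cos (\<theta> - pi/4) = 1" by (subst True) simp
  thus ?thesis unfolding G_ff by simp
next
  case False thus ?thesis using G_lt[of \<theta>] assms by auto
qed

lemma G_cont: "continuous_on {pi/4..pi/2} (G1 (pi/4) 1)"
  unfolding G1_def
  by (intro continuous_intros) (use cos_pos in force)+

lemma sin_pos: "pi/4 \<le> \<theta> \<Longrightarrow> \<theta> \<le> pi/2 \<Longrightarrow> sin \<theta> > 0"
  using pi_gt_zero by (intro sin_gt_zero) linarith+

lemma sqrt2_bound: "6/5 * (sqrt 2 / 2) < (1::real)"
proof -
  have "sqrt 2 < sqrt ((5/3)^2)" by (subst real_sqrt_less_iff) (simp add: power2_eq_square)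
  thus ?thesis by simp
qed


lemma exists_k: "\<exists>\<theta>2 k. pi/4 < \<theta>2 \<and> \<theta>2 \<le> pi/2 \<and> 6/5 * sin \<theta>2 > 1 \<and> k > 1 \<and>
   (\<forall>\<theta>\<in>{pi/4..pi/2}. G1 (pi/4) 1 \<theta> \<le> ff 1 * (6/5 * sin \<theta> + k * (1 - 6/5 * sin \<theta>))) \<and>
   G1 (pi/4) 1 \<theta>2 = ff 1 * (6/5 * sin \<theta>2 + k * (1 - 6/5 * sin \<theta>2))"
proof -
  define G where "G = G1 (pi/4) 1"
  define c0 where "c0 = ff 1"
  define L :: real where "L = 6/5"
  have c0p: "c0 > 0" using c0_pos by (simp add: c0_def)
  define N where "N \<theta> = c0 * L * sin \<theta> - G \<theta>" for \<theta>
  define D where "D \<theta> = c0 * (L * sin \<theta> - 1)" for \<theta>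
  define R where "R \<theta> = N \<theta> / D \<theta>" for \<theta>
  define R2 where "R2 = R (pi/2)"
  have Gle: "\<And>\<theta>. \<theta> \<in> {pi/4..pi/2} \<Longrightarrow> G \<theta> \<le> c0" using G_le by (auto simp: G_def c0_def)
  have Glt: "\<And>\<theta>. pi/4 < \<theta> \<Longrightarrow> \<theta> \<le> pi/2 \<Longrightarrow> G \<theta> < c0" using G_lt by (auto simp: G_def c0_def)
  have pi4: "pi/4 < pi/2" using pi_gt_zero by simp
  have D2: "D (pi/2) = c0 / 5" by (simp add: D_def L_def)
  have D2p: "D (pi/2) > 0" using D2 c0p by simp
  have N2: "N (pi/2) > D (pi/2)" using Glt[OF pi4] by (simp add: N_def D_def L_def algebra_simps)
  have R2gt: "R2 > 1" using N2 D2p by (simp add: R2_def R_def)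
  define C where "C = {\<theta> \<in> {pi/4..pi/2}. N \<theta> \<le> R2 * D \<theta>}"
  have Gc: "continuous_on {pi/4..pi/2} G" using G_cont by (simp add: G_def)
  have "closed C" unfolding C_def N_def D_def
    by (intro continuous_on_closed_Collect_le continuous_intros Gc)
  hence compC: "compact C"
    unfolding compact_eq_bounded_closed
    by (intro conjI bounded_subset[OF bounded_closed_interval[of "pi/4" "pi/2"]]) (auto simp: C_def)
  have pi2C: "pi/2 \<in> C" using pi4 D2p by (simp add: C_def R2_def R_def)
  have sin4: "L * sin (pi/4) < 1" using sqrt2_bound by (simp add: L_def sin_45)
  have CL: "L * sin \<theta> > 1" if th: "\<theta> \<in> C" for \<theta>
  proof (rule ccontr)
    assume "\<not> L * sin \<theta> > 1"
    hence le: "L * sin \<theta> - 1 \<le> 0" by simp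
    have r: "\<theta> \<in> {pi/4..pi/2}" and ineq: "N \<theta> \<le> R2 * D \<theta>" using th by (auto simp: C_def)
    have a: "N \<theta> \<ge> D \<theta>" using Gle[OF r] by (simp add: N_def D_def algebra_simps)
    have "D \<theta> \<le> 0" using c0p le by (simp add: D_def mult_nonneg_nonpos)
    hence "(R2 - 1) * D \<theta> \<le> 0" using R2gt by (intro mult_nonneg_nonpos) auto
    moreover have e: "(R2 - 1) * D \<theta> = R2 * D \<theta> - D \<theta>" by (simp add: algebra_simps)
    ultimately have b: "(R2 - 1) * D \<theta> = 0" and c: "N \<theta> = D \<theta>" using a ineq by linarith+
    from b have "L * sin \<theta> = 1" using R2gt c0p by (simp add: D_def)
    moreover from c have "G \<theta> = c0" by (simp add: N_def D_def algebra_simps)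
    ultimately show False
      using Glt[of \<theta>] r sin4 by (cases "\<theta> = pi/4") auto
  qed
  have Dpos: "D \<theta> > 0" if "\<theta> \<in> C" for \<theta> using CL[OF that] c0p by (simp add: D_def)
  have Csub: "C \<subseteq> {pi/4..pi/2}" by (auto simp: C_def)
  have cN: "continuous_on C N" unfolding N_def
    by (intro continuous_intros continuous_on_subset[OF Gc Csub])
  have cD: "continuous_on C D" unfolding D_def by (intro continuous_intros)
  have "continuous_on C R" unfolding R_def
    using Dpos by (intro continuous_on_divide cN cD) force
  then obtain \<theta>2 where t2C: "\<theta>2 \<in> C" and min: "\<And>y. y \<in> C \<Longrightarrow> R \<theta>2 \<le> R y"
    using continuous_attains_inf[OF compC] pi2C by blast
  define k where "k = R \<theta>2"
  have t2r: "\<theta>2 \<in> {pi/4..pi/2}" using t2C by (simp add: C_def)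
  have t2L: "L * sin \<theta>2 > 1" using CL[OF t2C] .
  have t2ne: "\<theta>2 \<noteq> pi/4"
  proof
    assume h: "\<theta>2 = pi/4"
    from t2L have "1 < L * sin (pi/4)" unfolding h .
    thus False using sin4 by linarith
  qed
  hence t2gt: "pi/4 < \<theta>2" using t2r by auto
  have "N \<theta>2 > D \<theta>2" using Glt[OF t2gt] t2r by (simp add: N_def D_def algebra_simps)
  hence kgt: "k > 1" using Dpos[OF t2C] by (simp add: k_def R_def)
  have key: "G \<theta> \<le> c0 * (L * sin \<theta> + k * (1 - L * sin \<theta>))" if r: "\<theta> \<in> {pi/4..pi/2}" for \<theta>
  proof (cases "L * sin \<theta> > 1")
    case False
    have "0 \<le> c0 * ((k - 1) * (1 - L * sin \<theta>))"
      using False kgt c0p by (intro mult_nonneg_nonneg) auto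
    thus ?thesis using Gle[OF r] by (simp add: algebra_simps)
  next
    case True
    have Dp: "D \<theta> > 0" using True c0p by (simp add: D_def)
    have "k \<le> R \<theta>"
    proof (cases "\<theta> \<in> C")
      case True thus ?thesis using min by (simp add: k_def)
    next
      case False
      hence "N \<theta> > R2 * D \<theta>" using r by (auto simp: C_def)
      hence "R \<theta> > R2" using Dp by (simp add: R_def pos_less_divide_eq)
      moreover have "k \<le> R2" using min[OF pi2C] by (simp add: k_def R2_def)
      ultimately show ?thesis by simp
    qed
    hence "k * D \<theta> \<le> N \<theta>" using Dp by (simp add: R_def pos_le_divide_eq)
    thus ?thesis by (simp add: N_def D_def algebra_simps)
  qed
  have "k * D \<theta>2 = N \<theta>2" using Dpos[OF t2C] by (simp add: k_def R_def)
  hence eq: "G \<theta>2 = c0 * (L * sin \<theta>2 + k * (1 - L * sin \<theta>2))"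
    by (simp add: N_def D_def algebra_simps)
  show ?thesis
    using t2gt t2r t2L kgt key eq by (intro exI[of _ \<theta>2] exI[of _ k]) (auto simp: G_def c0_def L_def)
qed


lemma sin_ge: "pi/4 \<le> t \<Longrightarrow> t \<le> pi/2 \<Longrightarrow> sqrt 2 / 2 \<le> sin t"
  using sin_monotone_2pi_le[of "pi/4" t] pi_gt_zero by (simp add: sin_45)

lemma sqrt2_gt: "sqrt 2 / 2 > (1/2::real)" by simp

lemma inv_sin_bound: "pi/4 \<le> t \<Longrightarrow> t \<le> pi/2 \<Longrightarrow> \<bar>1 / sin t\<bar> \<le> 2"
proof -
  assume a: "pi/4 \<le> t" "t \<le> pi/2"
  have s: "sin t > 1/2" using sin_ge[OF a] sqrt2_gt by linarith
  hence "1 / sin t \<le> 1 / (1/2)" by (intro divide_left_mono) auto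
  thus ?thesis using s by simp
qed

lemma ff_nonneg: "c > 0 \<Longrightarrow> ff c \<ge> 0" by (simp add: ff_def)

lemma c0_le1: "ff 1 \<le> 1" by (simp add: ff_def)

lemma g_bound: assumes "pi/4 \<le> t" "t \<le> pi/2" shows "\<bar>g1 (pi/4) 1 t\<bar> \<le> 2"
proof -
  have G0: "0 \<le> G1 (pi/4) 1 t" using ff_nonneg cos_pos[OF assms] by (simp add: G_ff)
  have G1': "G1 (pi/4) 1 t \<le> 1" using G_le[OF assms] c0_le1 by linarith
  have s: "sin t > 1/2" using sin_ge[OF assms] sqrt2_gt by linarith
  have "G1 (pi/4) 1 t / sin t \<le> 1 / sin t" using G1' s by (intro divide_right_mono) auto
  also have "\<dots> \<le> 2" using inv_sin_bound[OF assms] s by simp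
  finally show ?thesis using G0 s by (simp add: g1_def)
qed

lemma I_bound: "0 < e \<Longrightarrow> e < 1 \<Longrightarrow> \<bar>I_step e y\<bar> \<le> 1" by (simp add: I_step_def)

lemma int_ind: assumes "1 < (h::real)" shows "(LINT y:{0..h}|lebesgue. (if y \<le> 1 then 1 else 0::real)) = 1"
proof -
  have "(\<lambda>y. indicator {0..h} y *\<^sub>R (if y \<le> 1 then 1 else 0::real)) = indicator {0..1}"
  proof
    fix y show "indicator {0..h} y *\<^sub>R (if y \<le> 1 then 1 else 0::real) = indicator {0..1} y"
      using assms by (cases "0 \<le> y"; cases "y \<le> 1") (auto simp: indicator_def)
  qed
  thus ?thesis unfolding set_lebesgue_integral_def by simp
qed

lemma split_int: fixes f :: "real \<Rightarrow> real"
  assumes "1 < h" "set_integrable lebesgue {0..h} f"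
  shows "(LINT y:{0..h}|lebesgue. f y) = (LINT y:{0..1}|lebesgue. f y) + (LINT y:{1<..h}|lebesgue. f y)"
proof -
  have e: "{0..h} = {0..1} \<union> {1<..h}" using assms by auto
  show ?thesis unfolding e
    by (rule set_integral_Un) (use assms in \<open>auto intro: set_integrable_subset\<close>)
qed

lemma const_Icc: "a \<le> b \<Longrightarrow> (LINT y:{a..b}|lebesgue. (c::real)) = c * (b - a)"
  by (subst set_integral_const) (auto simp: emeasure_lborel_Icc_eq)

lemma const_Ioc: "a \<le> b \<Longrightarrow> (LINT y:{a<..b}|lebesgue. (c::real)) = c * (b - a)"
  by (subst set_integral_const) auto


lemma meas_inv_sin: "(\<lambda>t::real. 1 / sin t) \<in> borel_measurable borel" by measurable
lemma meas_g: "g1 (pi/4) 1 \<in> borel_measurable borel" unfolding g1_def G1_def by measurable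
lemma meas_I: "I_step e \<in> borel_measurable borel" unfolding I_step_def by measurable
lemma meas_ind: "(\<lambda>y::real. if y \<le> 1 then 1 else 0::real) \<in> borel_measurable borel" by measurable

lemma integrables:
  assumes m: "set_borel_measurable lebesgue {0..h} \<theta>"
    and r: "\<forall>y\<in>{0..h}. pi/4 \<le> \<theta> y \<and> \<theta> y \<le> pi/2"
    and e: "0 < e" "e < 1"
  shows "set_integrable lebesgue {0..h} (\<lambda>y. 1 / sin (\<theta> y))"
    and "set_integrable lebesgue {0..h} (\<lambda>y. I_step e y * g1 (pi/4) 1 (\<theta> y))"
    and "set_integrable lebesgue {0..h} (\<lambda>y. if y \<le> 1 then 1 else 0::real)"
proof -
  have "set_integrable lebesgue {0..h} (\<lambda>y. (\<lambda>_. 1) y * (\<lambda>t. 1 / sin t) (\<theta> y))"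
    by (rule integ[OF m meas_inv_sin _, where B=2]) (use r inv_sin_bound in auto)
  thus "set_integrable lebesgue {0..h} (\<lambda>y. 1 / sin (\<theta> y))" by simp
  show "set_integrable lebesgue {0..h} (\<lambda>y. I_step e y * g1 (pi/4) 1 (\<theta> y))"
  proof (rule integ[OF m meas_g meas_I, where B=2])
    fix y assume y: "y \<in> {0..h}"
    have "\<bar>I_step e y\<bar> * \<bar>g1 (pi/4) 1 (\<theta> y)\<bar> \<le> 1 * 2"
      using I_bound[OF e] g_bound r y by (intro mult_mono) auto
    thus "\<bar>I_step e y * g1 (pi/4) 1 (\<theta> y)\<bar> \<le> 2" by (simp add: abs_mult)
  qed
  have "set_integrable lebesgue {0..h} (\<lambda>y. (\<lambda>y::real. if y \<le> 1 then 1 else 0::real) y * (\<lambda>_. 1) (\<theta> y))"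
    by (rule integ[OF m _ meas_ind, where B=1]) auto
  thus "set_integrable lebesgue {0..h} (\<lambda>y. if y \<le> 1 then 1 else 0::real)" by simp
qed

lemma ub:
  assumes e: "0 < e" "e < 1" "e * k = 1"
    and key: "\<forall>\<theta>\<in>{pi/4..pi/2}. G1 (pi/4) 1 \<theta> \<le> ff 1 * (6/5 * sin \<theta> + k * (1 - 6/5 * sin \<theta>))"
    and adm: "admissible1 (pi/4) (6/5) h \<theta>"
  shows "J1 (I_step e) (pi/4) 1 h \<theta> \<le> e * ff 1 * (6/5)"
proof -
  have hp: "h > 0" and m: "set_borel_measurable lebesgue {0..h} \<theta>"
    and r: "\<forall>y\<in>{0..h}. pi/4 \<le> \<theta> y \<and> \<theta> y \<le> pi/2"
    and len: "(LINT y:{0..h}|lebesgue. 1 / sin (\<theta> y)) = 6/5"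
    using adm by (auto simp: admissible1_def)
  note ints = integrables[OF m r e(1,2)]
  have kk: "k = 1 / e" using e by (simp add: field_simps)
  have c0p: "ff 1 > 0" by (rule c0_pos)
  show ?thesis
  proof (cases "h \<le> 1")
    case True
    have "J1 (I_step e) (pi/4) 1 h \<theta> \<le> (LINT y:{0..h}|lebesgue. e * ff 1 * (1 / sin (\<theta> y)))"
      unfolding J1_def
    proof (rule set_integral_mono[OF ints(2)])
      show "set_integrable lebesgue {0..h} (\<lambda>y. e * ff 1 * (1 / sin (\<theta> y)))"
        using ints(1) by (rule set_integrable_mult_right)
      fix y assume y: "y \<in> {0..h}"
      have Iy: "I_step e y = e" using y True by (simp add: I_step_def)
      have ry: "pi/4 \<le> \<theta> y" "\<theta> y \<le> pi/2" using r y by auto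
      have s: "sin (\<theta> y) > 0" using sin_pos[OF ry] .
      have "G1 (pi/4) 1 (\<theta> y) / sin (\<theta> y) \<le> ff 1 / sin (\<theta> y)"
        using G_le[OF ry] s by (intro divide_right_mono) auto
      hence "e * (G1 (pi/4) 1 (\<theta> y) / sin (\<theta> y)) \<le> e * (ff 1 / sin (\<theta> y))"
        using e by (intro mult_left_mono) auto
      thus "I_step e y * g1 (pi / 4) 1 (\<theta> y) \<le> e * ff 1 * (1 / sin (\<theta> y))"
        by (simp add: Iy g1_def)
    qed
    also have "\<dots> = e * ff 1 * (LINT y:{0..h}|lebesgue. 1 / sin (\<theta> y))"
      by (rule set_integral_mult_right)
    also have "\<dots> = e * ff 1 * (6/5)" by (simp only: len)
    finally show ?thesis .
  next
    case False
    hence h1: "1 < h" by simp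
    let ?B = "\<lambda>y. ff 1 * (1 / sin (\<theta> y)) + ff 1 * (6/5) * (e - 1) * (if y \<le> 1 then 1 else 0)"
    have iB: "set_integrable lebesgue {0..h} ?B"
      using ints(1,3) by (intro set_integral_add(1) set_integrable_mult_right) auto
    have "J1 (I_step e) (pi/4) 1 h \<theta> \<le> (LINT y:{0..h}|lebesgue. ?B y)"
      unfolding J1_def
    proof (rule set_integral_mono[OF ints(2) iB])
      fix y assume y: "y \<in> {0..h}"
      have ry: "pi/4 \<le> \<theta> y" "\<theta> y \<le> pi/2" using r y by auto
      define s where "s = sin (\<theta> y)"
      have s: "s > 0" using sin_pos[OF ry] by (simp add: s_def)
      define G where "G = G1 (pi/4) 1 (\<theta> y)"
      show "I_step e y * g1 (pi / 4) 1 (\<theta> y) \<le> ?B y"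
      proof (cases "y \<le> 1")
        case True
        have "G \<le> ff 1 * (6/5 * s + k * (1 - 6/5 * s))" using key ry by (auto simp: G_def s_def)
        hence "e * (G / s) \<le> e * (ff 1 * (6/5 * s + k * (1 - 6/5 * s)) / s)"
          using e s by (intro mult_left_mono divide_right_mono) auto
        also have "\<dots> = ff 1 * (1 / s) + ff 1 * (6/5) * (e - 1)"
          using e s unfolding kk by (simp add: field_simps)
        finally show ?thesis using True by (simp add: I_step_def g1_def G_def s_def)
      next
        case False
        have "G / s \<le> ff 1 / s" using G_le[OF ry] s by (intro divide_right_mono) (auto simp: G_def)
        thus ?thesis using False by (simp add: I_step_def g1_def G_def s_def)
      qed
    qed
    also have "\<dots> = ff 1 * (LINT y:{0..h}|lebesgue. 1 / sin (\<theta> y)) +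
        ff 1 * (6/5) * (e - 1) * (LINT y:{0..h}|lebesgue. (if y \<le> 1 then 1 else 0::real))"
      using ints(1,3) by (subst set_integral_add(2)) (auto simp only: set_integral_mult_right intro!: set_integrable_mult_right)
    also have "\<dots> = ff 1 * (6/5) + ff 1 * (6/5) * (e - 1) * 1"
      by (simp only: len int_ind[OF h1])
    also have "\<dots> = e * ff 1 * (6/5)" by (simp add: field_simps)
    finally show ?thesis .
  qed
qed


lemma sol1:
  assumes e: "0 < e" "e < 1"
  shows "admissible1 (pi/4) (6/5) (6/5 * (sqrt 2 / 2)) (\<lambda>_. pi/4)"
    and "J1 (I_step e) (pi/4) 1 (6/5 * (sqrt 2 / 2)) (\<lambda>_. pi/4) = e * ff 1 * (6/5)"
proof -
  let ?h = "6/5 * (sqrt 2 / 2) :: real"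
  have hlt: "?h < 1" by (rule sqrt2_bound)
  have hp: "?h > 0" by simp
  have pi4: "pi/4 \<le> pi/2" using pi_gt_zero by simp
  have "(LINT y:{0..?h}|lebesgue. 1 / sin (pi/4)) = 1 / sin (pi/4) * (?h - 0)"
    using hp by (intro const_Icc) simp
  also have "\<dots> = 6/5" by (simp add: sin_45)
  finally have len: "(LINT y:{0..?h}|lebesgue. 1 / sin (pi/4)) = 6/5" .
  show "admissible1 (pi/4) (6/5) ?h (\<lambda>_. pi/4)"
  proof -
    have "(\<lambda>y. indicator {0..?h} y *\<^sub>R (pi/4::real)) \<in> borel_measurable borel" by measurable
    hence "set_borel_measurable lebesgue {0..?h} (\<lambda>_. pi/4)"
      unfolding set_borel_measurable_def by (simp add: measurable_completion)
    thus ?thesis unfolding admissible1_def using hp pi4 len by auto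
  qed
  have "J1 (I_step e) (pi/4) 1 ?h (\<lambda>_. pi/4) = (LINT y:{0..?h}|lebesgue. e * g1 (pi/4) 1 (pi/4))"
    unfolding J1_def using hlt by (intro set_lebesgue_integral_cong) (auto simp: I_step_def)
  also have "\<dots> = e * g1 (pi/4) 1 (pi/4) * (?h - 0)"
    using hp by (intro const_Icc) simp
  also have "\<dots> = e * ff 1 * (6/5)"
    by (simp add: g1_def G_ff sin_45)
  finally show "J1 (I_step e) (pi/4) 1 ?h (\<lambda>_. pi/4) = e * ff 1 * (6/5)" .
qed

lemma sol2:
  assumes e: "0 < e" "e < 1" "e * k = 1"
    and t2: "pi/4 < t2" "t2 \<le> pi/2" "6/5 * sin t2 > 1"
    and eq: "G1 (pi/4) 1 t2 = ff 1 * (6/5 * sin t2 + k * (1 - 6/5 * sin t2))"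
  defines "h2 \<equiv> 1 + (6/5 - 1 / sin t2) * (sqrt 2 / 2)"
  shows "admissible1 (pi/4) (6/5) h2 (\<lambda>y. if y \<le> 1 then t2 else pi/4)"
    and "J1 (I_step e) (pi/4) 1 h2 (\<lambda>y. if y \<le> 1 then t2 else pi/4) = e * ff 1 * (6/5)"
    and "1 < h2"
proof -
  let ?t = "\<lambda>y::real. if y \<le> 1 then t2 else pi/4"
  have s: "sin t2 > 0" using sin_pos t2 by auto
  have "6/5 - 1 / sin t2 > 0" using s t2(3) by (simp add: field_simps)
  thus h1: "1 < h2" unfolding h2_def by simp
  have pi4: "pi/4 \<le> pi/2" using pi_gt_zero by simp
  have m: "set_borel_measurable lebesgue {0..h2} ?t"
  proof -
    have "(\<lambda>y. indicator {0..h2} y *\<^sub>R ?t y) \<in> borel_measurable borel" by measurable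
    thus ?thesis unfolding set_borel_measurable_def by (simp add: measurable_completion)
  qed
  have r: "\<forall>y\<in>{0..h2}. pi/4 \<le> ?t y \<and> ?t y \<le> pi/2" using t2 pi4 by auto
  note ints = integrables[OF m r e(1,2)]
  have sp: "(LINT y:{0..h2}|lebesgue. 1 / sin (?t y)) =
        (LINT y:{0..1::real}|lebesgue. 1 / sin (?t y)) + (LINT y:{1<..h2}|lebesgue. 1 / sin (?t y))"
    by (rule split_int[OF h1 ints(1)])
  have p1: "(LINT y:{0..1::real}|lebesgue. 1 / sin (?t y)) = (LINT y:{0..1::real}|lebesgue. 1 / sin t2)"
    unfolding set_lebesgue_integral_def by (rule Bochner_Integration.integral_cong) (auto simp: indicator_def I_step_def)
  have p1': "(LINT y:{0..1::real}|lebesgue. 1 / sin t2) = 1 / sin t2 * (1 - 0)" by (intro const_Icc) simp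
  have p2: "(LINT y:{1<..h2}|lebesgue. 1 / sin (?t y)) = (LINT y:{1<..h2}|lebesgue. 1 / sin (pi/4))"
    unfolding set_lebesgue_integral_def by (rule Bochner_Integration.integral_cong) (auto simp: indicator_def I_step_def)
  have p2': "(LINT y:{1<..h2}|lebesgue. 1 / sin (pi/4)) = 1 / sin (pi/4) * (h2 - 1)" using h1 by (intro const_Ioc) simp
  have p3: "1 / sin t2 * (1 - 0) + 1 / sin (pi/4) * (h2 - 1) = 6/5"
    by (simp add: h2_def sin_45 field_simps)
  have len: "(LINT y:{0..h2}|lebesgue. 1 / sin (?t y)) = 6/5"
    unfolding sp p1 p1' p2 p2' p3 ..
  show "admissible1 (pi/4) (6/5) h2 ?t"
    unfolding admissible1_def using h1 m r len by auto
  have sp: "J1 (I_step e) (pi/4) 1 h2 ?t =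
        (LINT y:{0..1::real}|lebesgue. I_step e y * g1 (pi/4) 1 (?t y)) + (LINT y:{1<..h2}|lebesgue. I_step e y * g1 (pi/4) 1 (?t y))"
    unfolding J1_def by (rule split_int[OF h1 ints(2)])
  have q1: "(LINT y:{0..1::real}|lebesgue. I_step e y * g1 (pi/4) 1 (?t y)) = (LINT y:{0..1::real}|lebesgue. e * g1 (pi/4) 1 t2)"
    unfolding set_lebesgue_integral_def by (rule Bochner_Integration.integral_cong) (auto simp: indicator_def I_step_def)
  have q1': "(LINT y:{0..1::real}|lebesgue. e * g1 (pi/4) 1 t2) = e * g1 (pi/4) 1 t2 * (1 - 0)" by (intro const_Icc) simp
  have q2: "(LINT y:{1<..h2}|lebesgue. I_step e y * g1 (pi/4) 1 (?t y)) = (LINT y:{1<..h2}|lebesgue. g1 (pi/4) 1 (pi/4))"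
    unfolding set_lebesgue_integral_def by (rule Bochner_Integration.integral_cong) (auto simp: indicator_def I_step_def)
  have q2': "(LINT y:{1<..h2}|lebesgue. g1 (pi/4) 1 (pi/4)) = g1 (pi/4) 1 (pi/4) * (h2 - 1)" using h1 by (intro const_Ioc) simp
  have q3: "e * g1 (pi/4) 1 t2 * (1 - 0) + g1 (pi/4) 1 (pi/4) * (h2 - 1) = e * ff 1 * (6/5)"
  proof -
    have kk: "k = 1 / e" using e by (simp add: field_simps)
    have a: "e * g1 (pi/4) 1 t2 = ff 1 * (6/5 * e + 1 / sin t2 - 6/5)"
      unfolding g1_def eq kk using e s by (simp add: field_simps)
    have b: "g1 (pi/4) 1 (pi/4) * (h2 - 1) = ff 1 * (6/5 - 1 / sin t2)"
      by (simp add: g1_def G_ff sin_45 h2_def field_simps)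
    show ?thesis by (simp only: mult_1_right diff_zero a b) (simp add: algebra_simps)
  qed
  show "J1 (I_step e) (pi/4) 1 h2 ?t = e * ff 1 * (6/5)"
    unfolding sp q1 q1' q2 q2' q3 ..
qed

theorem mainTheorem4:
  shows "\<exists>\<epsilon>\<in>{0<..<1::real}. \<exists>h1 \<theta>1 h2 \<theta>2.
           optimal_OP1 (I_step \<epsilon>) (pi/4) 1 (6/5) h1 \<theta>1 \<and>
           optimal_OP1 (I_step \<epsilon>) (pi/4) 1 (6/5) h2 \<theta>2 \<and>
           (h1, \<theta>1) \<noteq> (h2, \<theta>2) \<and> h1 < 1 \<and> 1 < h2"
proof -
  obtain t2 k where t2: "pi/4 < t2" "t2 \<le> pi/2" "6/5 * sin t2 > 1" and kgt: "k > 1"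
    and key: "\<forall>\<theta>\<in>{pi/4..pi/2}. G1 (pi/4) 1 \<theta> \<le> ff 1 * (6/5 * sin \<theta> + k * (1 - 6/5 * sin \<theta>))"
    and eq: "G1 (pi/4) 1 t2 = ff 1 * (6/5 * sin t2 + k * (1 - 6/5 * sin t2))"
    using exists_k by blast
  define e where "e = 1 / k"
  have e: "0 < e" "e < 1" "e * k = 1" using kgt by (auto simp: e_def)
  define h2 where "h2 = 1 + (6/5 - 1 / sin t2) * (sqrt 2 / 2)"
  note S1 = sol1[OF e(1,2)]
  note S2 = sol2[OF e t2 eq, folded h2_def]
  have o1: "optimal_OP1 (I_step e) (pi/4) 1 (6/5) (6/5 * (sqrt 2 / 2)) (\<lambda>_. pi/4)"
    unfolding optimal_OP1_def
  proof (intro conjI allI impI S1(1))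
    fix h' \<theta>' assume a: "admissible1 (pi/4) (6/5) h' \<theta>'"
    show "J1 (I_step e) (pi/4) 1 h' \<theta>' \<le> J1 (I_step e) (pi/4) 1 (6/5 * (sqrt 2 / 2)) (\<lambda>_. pi/4)"
      unfolding S1(2) by (rule ub[OF e key a])
  qed
  have o2: "optimal_OP1 (I_step e) (pi/4) 1 (6/5) h2 (\<lambda>y. if y \<le> 1 then t2 else pi/4)"
    unfolding optimal_OP1_def
  proof (intro conjI allI impI S2(1))
    fix h' \<theta>' assume a: "admissible1 (pi/4) (6/5) h' \<theta>'"
    show "J1 (I_step e) (pi/4) 1 h' \<theta>' \<le> J1 (I_step e) (pi/4) 1 h2 (\<lambda>y. if y \<le> 1 then t2 else pi/4)"
      unfolding S2(2) by (rule ub[OF e key a])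
  qed
  have ne: "(6/5 * (sqrt 2 / 2), (\<lambda>_::real. pi/4)) \<noteq> (h2, (\<lambda>y. if y \<le> 1 then t2 else pi/4))"
    using S2(3) sqrt2_bound by auto
  have ee: "e \<in> {0<..<1::real}" using e by auto
  show ?thesis
    using ee o1 o2 ne S2(3) sqrt2_bound by blast
qed

end
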